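(* Let $X$ be a real Banach space with $\dim X\ge 2$. Then $X$ is a Hilbert space (i.e. its norm is induced by an inner product) if and only if $S_P(X)=0$.
   Context: For a real Banach space $X$ with unit sphere $S_X$, the P-angle constant is $S_P(X)=\sup\left\{\frac{\|x+y\|^2+\|x-y\|^2-4}{2\|x+y\|\,\|x-y\|}: x,y\in S_X,\ x\neq \pm y\right\}$ (this is the supremum of $\cos\operatorname{ang}_P(x+y,x-y)$, where $\operatorname{ang}_P(u,v)=\arccos\frac{\|u\|^2+\|v\|^2-\|u-v\|^2}{2\|u\|\|v\|}$). *)

theory Defs
  imports "HOL-Analysis.Analysis"
begin

definition P_angle_constant :: "'a::real_normed_vector itself \<Rightarrow> real" where
  "P_angle_constant _ = Sup {(norm (x + y)^2 + norm (x - y)^2 - 4) / (2 * norm (x + y) * norm (x - y)) | x y :: 'a.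
      norm x = 1 \<and> norm y = 1 \<and> x \<noteq> y \<and> x \<noteq> - y}"

definition norm_from_inner_product :: "'a::real_normed_vector itself \<Rightarrow> bool" where
  "norm_from_inner_product _ \<longleftrightarrow> (\<exists>ip :: 'a \<Rightarrow> 'a \<Rightarrow> real.
      (\<forall>x y. ip x y = ip y x) \<and>
      (\<forall>x y z. ip (x + y) z = ip x z + ip y z) \<and>
      (\<forall>r x y. ip (r *\<^sub>R x) y = r * ip x y) \<and>
      (\<forall>x. 0 \<le> ip x x) \<and>
      (\<forall>x. norm x = sqrt (ip x x)))"

end

theory Submission
  imports Defs
begin

lemma additive_bounded_linear:
  fixes f :: "real \<Rightarrow> real"
  assumes add: "\<And>a b. f (a + b) = f a + f b"
    and bnd: "\<And>r. \<bar>f r\<bar> \<le> C * \<bar>r\<bar>"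
  shows "f r = r * f 1"
proof -
  define g where "g s = f s - s * f 1" for s
  have gadd: "g (a + b) = g a + g b" for a b
    unfolding g_def using add[of a b] by (simp add: algebra_simps)
  have g0: "g 0 = 0" using gadd[of 0 0] by simp
  have gneg: "g (- a) = - g a" for a using gadd[of a "-a"] g0 by simp
  have gbnd: "\<bar>g s\<bar> \<le> (C + \<bar>f 1\<bar>) * \<bar>s\<bar>" for s
  proof -
    have "\<bar>g s\<bar> \<le> \<bar>f s\<bar> + \<bar>s\<bar> * \<bar>f 1\<bar>" unfolding g_def using abs_triangle_ineq4[of "f s" "s * f 1"] by (simp add: abs_mult)
    also have "\<dots> \<le> C * \<bar>s\<bar> + \<bar>s\<bar> * \<bar>f 1\<bar>" using bnd[of s] by simp
    finally show ?thesis by (simp add: algebra_simps)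
  qed
  have gnat: "g (real n * s) = real n * g s" for n s
    by (induction n) (simp_all add: g0 gadd algebra_simps)
  have g1: "g 1 = 0" unfolding g_def by simp
  have gint: "g (of_int k) = 0" for k
  proof (cases "k \<ge> 0")
    case True
    then obtain n where "k = int n" by (metis nonneg_eq_int)
    then show ?thesis using gnat[of n 1] g1 by simp
  next
    case False
    then obtain n where "k = - int n" by (intro that[of "nat (-k)"]) simp
    then show ?thesis using gnat[of n 1] g1 gneg[of "real n"] by simp
  qed
  define D where "D = C + \<bar>f 1\<bar>"
  have key: "real N * \<bar>g r\<bar> \<le> D" if "N \<ge> 1" for N
  proof -
    define t where "t = real N * r"
    have "g t = g (t - of_int \<lfloor>t\<rfloor>) + g (of_int \<lfloor>t\<rfloor>)" using gadd[of "t - of_int \<lfloor>t\<rfloor>" "of_int \<lfloor>t\<rfloor>"] by simp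
    then have "g t = g (t - of_int \<lfloor>t\<rfloor>)" using gint by simp
    moreover have "\<bar>t - of_int \<lfloor>t\<rfloor>\<bar> \<le> 1" by linarith
    moreover have "C + \<bar>f 1\<bar> \<ge> 0"
    proof -
      have "\<bar>f 1\<bar> \<le> C" using bnd[of 1] by simp
      then show ?thesis by simp
    qed
    ultimately have "\<bar>g t\<bar> \<le> D" using gbnd[of "t - of_int \<lfloor>t\<rfloor>"] unfolding D_def
      using mult_left_le[of "\<bar>t - of_int \<lfloor>t\<rfloor>\<bar>" "C + \<bar>f 1\<bar>"] by linarith
    then show ?thesis unfolding t_def gnat by (simp add: abs_mult)
  qed
  have "g r = 0"
  proof (rule ccontr)
    assume ne: "g r \<noteq> 0"
    then have pos: "\<bar>g r\<bar> > 0" by simp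
    obtain N :: nat where N: "D / \<bar>g r\<bar> < real N" using reals_Archimedean2 by blast
    have "D < real N * \<bar>g r\<bar>" using N pos by (simp add: field_simps)
    moreover have "N \<ge> 1"
    proof (rule ccontr)
      assume "\<not> N \<ge> 1" then have "N = 0" by simp
      then have "D < 0" using \<open>D < real N * \<bar>g r\<bar>\<close> by simp
      moreover have "D \<ge> 0" unfolding D_def using bnd[of 1] by simp
      ultimately show False by simp
    qed
    ultimately show False using key by fastforce
  qed
  then show ?thesis unfolding g_def by simp
qed

lemma jvn:
  assumes par: "\<And>x y::'a::real_normed_vector. (norm (x + y))^2 + (norm (x - y))^2 = 2 * (norm x)^2 + 2 * (norm y)^2"
  shows "\<exists>ip :: 'a \<Rightarrow> 'a \<Rightarrow> real.
      (\<forall>x y. ip x y = ip y x) \<and>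
      (\<forall>x y z. ip (x + y) z = ip x z + ip y z) \<and>
      (\<forall>r x y. ip (r *\<^sub>R x) y = r * ip x y) \<and>
      (\<forall>x. 0 \<le> ip x x) \<and>
      (\<forall>x. norm x = sqrt (ip x x))"
proof -
  define ip where "ip x y = ((norm (x + y))^2 - (norm (x - y))^2) / 4" for x y :: 'a
  have sym: "ip x y = ip y x" for x y
    unfolding ip_def by (simp add: add.commute norm_minus_commute)
  have diag: "ip x x = (norm x)^2" for x
  proof -
    have "norm (x + x) = 2 * norm x" by (metis norm_scaleR real_norm_def scaleR_2 abs_numeral)
    then show ?thesis unfolding ip_def by (simp add: power_mult_distrib)
  qed
  have ip0: "ip 0 z = 0" for z unfolding ip_def by simp
  have key: "ip (x + y) z + ip (x - y) z = 2 * ip x z" for x y z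
  proof -
    have e1: "(norm (x + z + y))^2 + (norm (x + z - y))^2 = 2 * (norm (x + z))^2 + 2 * (norm y)^2" by (rule par)
    have e2: "(norm (x - z + y))^2 + (norm (x - z - y))^2 = 2 * (norm (x - z))^2 + 2 * (norm y)^2" by (rule par)
    have a1: "x + y + z = x + z + y" "x + y - z = x - z + y" "x - y + z = x + z - y" "x - y - z = x - z - y"
      by (simp_all add: algebra_simps)
    show ?thesis unfolding ip_def a1 using e1 e2 by (simp add: field_simps)
  qed
  have dbl: "ip (x + x) z = 2 * ip x z" for x z using key[of x x z] ip0 by simp
  have addl: "ip (u + v) z = ip u z + ip v z" for u v z
  proof -
    define x where "x = (1/2) *\<^sub>R (u + v)"
    define y where "y = (1/2) *\<^sub>R (u - v)"
    have "x + y = u" "x - y = v" "x + x = u + v" unfolding x_def y_def by (simp_all add: algebra_simps flip: scaleR_2)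
    then show ?thesis using key[of x y z] dbl[of x z] by simp
  qed
  have crude: "\<bar>ip z y\<bar> \<le> norm y * (norm z + norm y)" for z y
  proof -
    have "\<bar>norm (z + y) - norm (z - y)\<bar> \<le> norm ((z + y) - (z - y))" by (rule norm_triangle_ineq3)
    also have "(z + y) - (z - y) = 2 *\<^sub>R y" by (simp add: algebra_simps flip: scaleR_2)
    finally have h1: "\<bar>norm (z + y) - norm (z - y)\<bar> \<le> 2 * norm y" by simp
    have h2: "norm (z + y) + norm (z - y) \<le> 2 * (norm z + norm y)"
      using norm_triangle_ineq[of z y] norm_triangle_ineq4[of z y] by simp
    have "\<bar>(norm (z + y))^2 - (norm (z - y))^2\<bar> = \<bar>norm (z + y) - norm (z - y)\<bar> * (norm (z + y) + norm (z - y))"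
    proof -
      have "(norm (z + y))^2 - (norm (z - y))^2 = (norm (z + y) - norm (z - y)) * (norm (z + y) + norm (z - y))"
        by (simp add: power2_eq_square algebra_simps)
      then show ?thesis by (simp add: abs_mult)
    qed
    also have "\<dots> \<le> (2 * norm y) * (2 * (norm z + norm y))"
      by (rule mult_mono[OF h1 h2]) simp_all
    finally show ?thesis unfolding ip_def by (simp add: algebra_simps)
  qed
  have ipnat: "ip (real n *\<^sub>R z) y = real n * ip z y" for n z y
    by (induction n) (simp_all add: ip0 addl algebra_simps)
  have cs: "\<bar>ip z y\<bar> \<le> norm z * norm y" for z y
  proof (rule ccontr)
    assume "\<not> ?thesis"
    then have e: "\<bar>ip z y\<bar> - norm z * norm y > 0" by simp
    obtain n :: nat where n: "(norm y)^2 / (\<bar>ip z y\<bar> - norm z * norm y) < real n" using reals_Archimedean2 by blast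
    have npos: "real n > 0" using n e by (smt (verit) divide_nonneg_pos zero_le_power2)
    have "real n * \<bar>ip z y\<bar> = \<bar>ip (real n *\<^sub>R z) y\<bar>" by (simp add: ipnat abs_mult)
    also have "\<dots> \<le> norm y * (norm (real n *\<^sub>R z) + norm y)" by (rule crude)
    also have "\<dots> = real n * (norm z * norm y) + (norm y)^2" by (simp add: algebra_simps power2_eq_square)
    finally have "real n * (\<bar>ip z y\<bar> - norm z * norm y) \<le> (norm y)^2" by (simp add: algebra_simps)
    moreover have "(norm y)^2 < real n * (\<bar>ip z y\<bar> - norm z * norm y)" using n e by (simp add: field_simps)
    ultimately show False by simp
  qed
  have hom: "ip (r *\<^sub>R x) y = r * ip x y" for r x y
  proof -
    have "(\<lambda>s. ip (s *\<^sub>R x) y) r = r * (\<lambda>s. ip (s *\<^sub>R x) y) 1"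
    proof (rule additive_bounded_linear[where C = "norm x * norm y"])
      show "ip ((a + b) *\<^sub>R x) y = ip (a *\<^sub>R x) y + ip (b *\<^sub>R x) y" for a b
        by (simp add: scaleR_add_left addl)
      show "\<bar>ip (s *\<^sub>R x) y\<bar> \<le> norm x * norm y * \<bar>s\<bar>" for s
        using cs[of "s *\<^sub>R x" y] by (simp add: algebra_simps)
    qed
    then show ?thesis by simp
  qed
  show ?thesis
    apply (rule exI[of _ ip])
    using sym addl hom diag by simp
qed



definition Qf :: "real \<Rightarrow> real \<Rightarrow> real \<Rightarrow> real \<Rightarrow> real \<Rightarrow> real" where
  "Qf al be ga a b = al * a^2 + 2 * ga * a * b + be * b^2"
definition Bf :: "real \<Rightarrow> real \<Rightarrow> real \<Rightarrow> real \<Rightarrow> real \<Rightarrow> real \<Rightarrow> real \<Rightarrow> real" where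
  "Bf al be ga a b c d = al * a * c + ga * (a * d + b * c) + be * b * d"

lemma Qf_Bf: "Qf al be ga a b = Bf al be ga a b a b"
  unfolding Qf_def Bf_def by (simp add: power2_eq_square algebra_simps)

lemma Qf_scale: "Qf al be ga (t * a) (t * b) = t^2 * Qf al be ga a b"
  unfolding Qf_def by (simp add: power2_eq_square algebra_simps)

lemma Qf_par: "Qf al be ga (a + c) (b + d) + Qf al be ga (a - c) (b - d) = 2 * Qf al be ga a b + 2 * Qf al be ga c d"
  unfolding Qf_def by (simp add: power2_eq_square algebra_simps)

lemma Qf_CS_id: "Qf al be ga a b * Qf al be ga c d - (Bf al be ga a b c d)^2 = (al * be - ga^2) * (a * d - b * c)^2"
  unfolding Qf_def Bf_def by (simp add: power2_eq_square algebra_simps)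

lemma Qf_pd_id: "al * Qf al be ga a b = (al * a + ga * b)^2 + (al * be - ga^2) * b^2"
  unfolding Qf_def by (simp add: power2_eq_square algebra_simps)

lemma Qf_pos:
  assumes "al > 0" "al * be - ga^2 > 0" "a \<noteq> 0 \<or> b \<noteq> 0"
  shows "Qf al be ga a b > 0"
proof (cases "b = 0")
  case True
  then have "a \<noteq> 0" using assms by simp
  then show ?thesis using True assms unfolding Qf_def by simp
next
  case False
  then have "al * Qf al be ga a b > 0" unfolding Qf_pd_id
    using assms by (simp add: add_nonneg_pos)
  then show ?thesis using assms(1) by (simp add: zero_less_mult_iff)
qed

lemma Qf_CS:
  assumes "al * be - ga^2 \<ge> 0"
  shows "(Bf al be ga a b c d)^2 \<le> Qf al be ga a b * Qf al be ga c d"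
  using Qf_CS_id[of al be ga a b c d] assms by (smt (verit) mult_nonneg_nonneg zero_le_power2)

lemma polar:
  fixes a b :: real
  obtains r t where "0 \<le> r" "0 \<le> t" "t \<le> 2 * pi" "a = r * cos t" "b = r * sin t"
proof (cases "a = 0 \<and> b = 0")
  case True
  then show ?thesis using that[of 0 0] by simp
next
  case False
  define r where "r = sqrt (a^2 + b^2)"
  have rpos: "r > 0" unfolding r_def using False by (simp add: sum_power2_gt_zero_iff)
  have "(a / r)^2 + (b / r)^2 = 1"
    using rpos False unfolding r_def by (simp add: power_divide add_divide_distrib[symmetric])
  then obtain t where t: "0 \<le> t" "t < 2 * pi" "a / r = cos t" "b / r = sin t"
    by (rule sincos_total_2pi)
  show ?thesis
    apply (rule that[of r t])
    using t rpos by (simp_all add: field_simps)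
qed

lemma Bf_sym: "Bf al be ga a b c d = Bf al be ga c d a b"
  unfolding Bf_def by (simp add: algebra_simps)

lemma Bf_lin: "Bf al be ga a b (s * c + t * e) (s * d + t * f) = s * Bf al be ga a b c d + t * Bf al be ga a b e f"
  unfolding Bf_def by (simp add: algebra_simps)

lemma Bf_scale: "Bf al be ga a b (s * c) (s * d) = s * Bf al be ga a b c d"
  unfolding Bf_def by (simp add: algebra_simps)

lemma Bf_diff: "Bf al be ga a b (c - t * e) (d - t * f) = Bf al be ga a b c d - t * Bf al be ga a b e f"
  unfolding Bf_def by (simp add: algebra_simps)

lemma Qf_lin: "Qf al be ga (s * u1 + t * v1) (s * u2 + t * v2) =
   s^2 * Qf al be ga u1 u2 + 2 * s * t * Bf al be ga u1 u2 v1 v2 + t^2 * Qf al be ga v1 v2"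
  unfolding Qf_def Bf_def by (simp add: power2_eq_square algebra_simps)

context
  fixes x y :: "'a::real_normed_vector"
  assumes indep: "\<And>a b. a *\<^sub>R x + b *\<^sub>R y = 0 \<Longrightarrow> a = 0 \<and> b = 0"
  and Lc: "\<And>u v::'a. norm u = norm v \<Longrightarrow> (norm (u + v))^2 + (norm (u - v))^2 \<le> 2 * (norm u)^2 + 2 * (norm v)^2"
begin

definition psi :: "real \<Rightarrow> real \<Rightarrow> real" where
  "psi a b = (norm (a *\<^sub>R x + b *\<^sub>R y))^2"

lemma psi_hom: "psi (t * a) (t * b) = t^2 * psi a b"
proof -
  have "(t * a) *\<^sub>R x + (t * b) *\<^sub>R y = t *\<^sub>R (a *\<^sub>R x + b *\<^sub>R y)" by (simp add: algebra_simps)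
  then show ?thesis unfolding psi_def by (simp add: power_mult_distrib)
qed

lemma psi_nonneg: "psi a b \<ge> 0" unfolding psi_def by simp

lemma psi_pos: "a \<noteq> 0 \<or> b \<noteq> 0 \<Longrightarrow> psi a b > 0"
  unfolding psi_def using indep[of a b] by auto

lemma psi_L:
  assumes "psi p1 p2 = psi q1 q2"
  shows "psi (p1 + q1) (p2 + q2) + psi (p1 - q1) (p2 - q2) \<le> 2 * psi p1 p2 + 2 * psi q1 q2"
proof -
  define u where "u = p1 *\<^sub>R x + p2 *\<^sub>R y"
  define v where "v = q1 *\<^sub>R x + q2 *\<^sub>R y"
  have "norm u = norm v" using assms unfolding psi_def u_def v_def
    by (metis norm_ge_zero power2_eq_imp_eq)
  then have "(norm (u + v))^2 + (norm (u - v))^2 \<le> 2 * (norm u)^2 + 2 * (norm v)^2" by (rule Lc)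
  moreover have "(p1 + q1) *\<^sub>R x + (p2 + q2) *\<^sub>R y = u + v" "(p1 - q1) *\<^sub>R x + (p2 - q2) *\<^sub>R y = u - v"
    unfolding u_def v_def by (simp_all add: algebra_simps)
  ultimately show ?thesis unfolding psi_def u_def v_def by simp
qed

lemma psi_cont [continuous_intros]:
  assumes "continuous_on S f" "continuous_on S g"
  shows "continuous_on S (\<lambda>t. psi (f t) (g t))"
  unfolding psi_def by (intro continuous_intros assms)

lemma psi_polar: "psi (r * cos t) (r * sin t) = r^2 * psi (cos t) (sin t)"
  by (rule psi_hom)

lemma psi_lower: "\<exists>c>0. \<forall>a b. c * (a^2 + b^2) \<le> psi a b"
proof -
  have "\<exists>t0\<in>{0..2*pi}. \<forall>t\<in>{0..2*pi}. psi (cos t0) (sin t0) \<le> psi (cos t) (sin t)"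
    by (rule continuous_attains_inf) (auto intro!: continuous_intros)
  then obtain t0 where t0: "\<And>t. t \<in> {0..2*pi} \<Longrightarrow> psi (cos t0) (sin t0) \<le> psi (cos t) (sin t)" by blast
  have cpos: "psi (cos t0) (sin t0) > 0"
    by (rule psi_pos) (metis sin_cos_squared_add zero_neq_one power2_eq_square mult_zero_left add_0)
  show ?thesis
  proof (intro exI[of _ "psi (cos t0) (sin t0)"] conjI allI cpos)
    fix a b :: real
    obtain r t where rt: "0 \<le> r" "0 \<le> t" "t \<le> 2 * pi" "a = r * cos t" "b = r * sin t" by (rule polar)
    have "a^2 + b^2 = r^2" using rt by (simp add: power_mult_distrib flip: distrib_left) 
    then show "psi (cos t0) (sin t0) * (a^2 + b^2) \<le> psi a b"
      using mult_right_mono[OF t0[of t] zero_le_power2[of r]] rt psi_polar[of r t] by (simp add: mult.commute)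
  qed
qed


definition feasible :: "real \<Rightarrow> real \<Rightarrow> real \<Rightarrow> bool" where
  "feasible al be ga \<longleftrightarrow> 0 \<le> al \<and> 0 \<le> be \<and> (\<forall>a b. Qf al be ga a b \<le> psi a b)"

lemma max_exists:
  "\<exists>al be ga. feasible al be ga \<and> al * be - ga^2 > 0 \<and>
     (\<forall>al' be' ga'. feasible al' be' ga' \<longrightarrow> al' * be' - ga'^2 \<le> al * be - ga^2)"
proof -
  define F where "F = {p :: real \<times> real \<times> real. feasible (fst p) (fst (snd p)) (snd (snd p))}"
  have "closed F"
    unfolding F_def feasible_def Qf_def
    by (intro closed_Collect_conj closed_Collect_all closed_Collect_le continuous_on_const continuous_on_fst continuous_on_snd continuous_on_add continuous_on_mult continuous_on_id continuous_on_power)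
  moreover have "bounded F"
  proof -
    define G where "G = psi 1 1 + psi 1 (-1)"
    have "F \<subseteq> {0..psi 1 0} \<times> {0..psi 0 1} \<times> {-G..G}"
    proof
      fix p assume "p \<in> F"
      moreover obtain al be ga where "p = (al, be, ga)" by (cases p)
      ultimately have p: "p = (al, be, ga)" "feasible al be ga" unfolding F_def by simp_all
      then have f: "0 \<le> al" "0 \<le> be" "\<And>a b. Qf al be ga a b \<le> psi a b" unfolding feasible_def by auto
      have "al \<le> psi 1 0" using f(3)[of 1 0] unfolding Qf_def by simp
      moreover have "be \<le> psi 0 1" using f(3)[of 0 1] unfolding Qf_def by simp
      moreover have "al + 2 * ga + be \<le> psi 1 1" using f(3)[of 1 1] unfolding Qf_def by simp
      moreover have "al - 2 * ga + be \<le> psi 1 (-1)" using f(3)[of 1 "-1"] unfolding Qf_def by simp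
      ultimately show "p \<in> {0..psi 1 0} \<times> {0..psi 0 1} \<times> {-G..G}"
        using p f psi_nonneg[of 1 1] psi_nonneg[of 1 "-1"] unfolding G_def by auto
    qed
    moreover have "bounded ({0..psi 1 0} \<times> {0..psi 0 1} \<times> {-G..G})"
      by (intro bounded_Times bounded_closed_interval)
    ultimately show ?thesis by (rule bounded_subset[rotated])
  qed
  ultimately have "compact F" by (simp add: compact_eq_bounded_closed)
  obtain c where c: "c > 0" "\<And>a b. c * (a^2 + b^2) \<le> psi a b" using psi_lower by blast
  have cF: "(c, c, 0) \<in> F" unfolding F_def feasible_def Qf_def using c
    by (simp add: algebra_simps)
  have "\<exists>p\<in>F. \<forall>q\<in>F. fst q * fst (snd q) - (snd (snd q))^2 \<le> fst p * fst (snd p) - (snd (snd p))^2"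
    by (rule continuous_attains_sup[OF \<open>compact F\<close>]) (use cF in \<open>auto intro!: continuous_intros\<close>)
  then obtain p where p: "p \<in> F" "\<And>q. q \<in> F \<Longrightarrow> fst q * fst (snd q) - (snd (snd q))^2 \<le> fst p * fst (snd p) - (snd (snd p))^2"
    by blast
  obtain al be ga where pe: "p = (al, be, ga)" by (cases p)
  have "c * c - 0^2 \<le> al * be - ga^2" using p(2)[OF cF] pe by simp
  moreover have "c * c > 0" using c(1) by simp
  ultimately have "al * be - ga^2 > 0" by simp
  moreover have "feasible al be ga" using p(1) pe unfolding F_def by simp
  moreover have "\<forall>al' be' ga'. feasible al' be' ga' \<longrightarrow> al' * be' - ga'^2 \<le> al * be - ga^2"
  proof (intro allI impI)
    fix al' be' ga' assume "feasible al' be' ga'"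
    then have "(al', be', ga') \<in> F" unfolding F_def by simp
    from p(2)[OF this] show "al' * be' - ga'^2 \<le> al * be - ga^2" using pe by simp
  qed
  ultimately show ?thesis by blast
qed


lemma contact_exists:
  assumes feas: "feasible al be ga" and det: "al * be - ga^2 > 0"
    and mx: "\<And>al' be' ga'. feasible al' be' ga' \<Longrightarrow> al' * be' - ga'^2 \<le> al * be - ga^2"
  shows "\<exists>p1 p2 q1 q2. psi p1 p2 = Qf al be ga p1 p2 \<and> psi q1 q2 = Qf al be ga q1 q2 \<and> p1 * q2 - p2 * q1 \<noteq> 0"
proof (rule ccontr)
  assume H: "\<not> ?thesis"
  have H': "psi p1 p2 = Qf al be ga p1 p2 \<Longrightarrow> psi q1 q2 = Qf al be ga q1 q2 \<Longrightarrow> p1 * q2 - p2 * q1 = 0"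
    for p1 p2 q1 q2 using H by blast
  have fe: "0 \<le> al" "0 \<le> be" "\<And>a b. Qf al be ga a b \<le> psi a b" using feas unfolding feasible_def by auto
  have alpos: "al > 0"
  proof -
    have "al * be > 0" using det by (smt (verit) zero_le_power2)
    then show ?thesis using fe by (simp add: zero_less_mult_iff)
  qed
  define D where "D = al * be - ga^2"
  have Dpos: "D > 0" using det D_def by simp
  have Qpos: "a \<noteq> 0 \<or> b \<noteq> 0 \<Longrightarrow> Qf al be ga a b > 0" for a b using Qf_pos[OF alpos det] by blast
  obtain w1 w2 where w: "Qf al be ga w1 w2 = 1" and wc: "\<And>z1 z2. psi z1 z2 = Qf al be ga z1 z2 \<Longrightarrow> z1 * w2 - z2 * w1 = 0"
  proof (cases "\<exists>p1 p2. (p1 \<noteq> 0 \<or> p2 \<noteq> 0) \<and> psi p1 p2 = Qf al be ga p1 p2")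
    case True
    then obtain p1 p2 where p: "p1 \<noteq> 0 \<or> p2 \<noteq> 0" "psi p1 p2 = Qf al be ga p1 p2" by blast
    define s where "s = 1 / sqrt (Qf al be ga p1 p2)"
    have qp: "Qf al be ga p1 p2 > 0" using Qpos[OF p(1)] .
    show ?thesis
    proof (rule that[of "s * p1" "s * p2"])
      show "Qf al be ga (s * p1) (s * p2) = 1" unfolding Qf_scale s_def using qp
        by (simp add: power_divide)
      fix z1 z2 assume "psi z1 z2 = Qf al be ga z1 z2"
      from H'[OF this p(2)] have "z1 * p2 - z2 * p1 = 0" .
      then show "z1 * (s * p2) - z2 * (s * p1) = 0" by (simp add: algebra_simps)
    qed
  next
    case False
    show ?thesis
    proof (rule that[of "1 / sqrt al" 0])
      show "Qf al be ga (1 / sqrt al) 0 = 1" unfolding Qf_def using alpos by (simp add: power_divide)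
      fix z1 z2 assume "psi z1 z2 = Qf al be ga z1 z2"
      then have "z1 = 0 \<and> z2 = 0" using False by blast
      then show "z1 * 0 - z2 * (1 / sqrt al) = 0" by simp
    qed
  qed
  define m1 where "m1 = al * w1 + ga * w2"
  define m2 where "m2 = ga * w1 + be * w2"
  define A where "A a b = a * m1 + b * m2" for a b
  have AB: "A a b = Bf al be ga a b w1 w2" for a b unfolding A_def m1_def m2_def Bf_def by (simp add: algebra_simps)
  have Acs: "(A a b)^2 \<le> Qf al be ga a b" for a b
    using Qf_CS[of al be ga a b w1 w2] det w AB by simp
  define K where "K = {0..2*pi} \<inter> {t. (A (cos t) (sin t))^2 \<le> 3/4 * Qf al be ga (cos t) (sin t)}"
  have cs_ne: "cos t \<noteq> 0 \<or> sin t \<noteq> 0" for t :: real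
    using sin_cos_squared_add[of t] by (auto simp: power2_eq_square)
  have Qe: "Qf al be ga (cos t) (sin t) > 0" for t :: real using Qpos[OF cs_ne] .
  have strict: "psi (cos t) (sin t) > Qf al be ga (cos t) (sin t)" if "t \<in> K" for t
  proof (rule ccontr)
    assume "\<not> ?thesis"
    then have eq: "psi (cos t) (sin t) = Qf al be ga (cos t) (sin t)" using fe(3)[of "cos t" "sin t"] by simp
    have cr: "cos t * w2 - sin t * w1 = 0" using wc[OF eq] .
    have "Qf al be ga (cos t) (sin t) * Qf al be ga w1 w2 - (Bf al be ga (cos t) (sin t) w1 w2)^2 = 0"
      unfolding Qf_CS_id cr by simp
    then have "(A (cos t) (sin t))^2 = Qf al be ga (cos t) (sin t)" using w AB by simp
    moreover have "(A (cos t) (sin t))^2 \<le> 3/4 * Qf al be ga (cos t) (sin t)" using that unfolding K_def by simp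
    ultimately show False using Qe[of t] by simp
  qed
  obtain mu where mu: "0 < mu" "mu \<le> 1" "\<And>t. t \<in> K \<Longrightarrow> (1 + mu) * Qf al be ga (cos t) (sin t) \<le> psi (cos t) (sin t)"
  proof (cases "K = {}")
    case True
    then show ?thesis using that[of 1] by simp
  next
    case False
    have "compact K" unfolding K_def A_def Qf_def
      by (intro compact_Int_closed compact_Icc closed_Collect_le continuous_intros)
    define f where "f t = psi (cos t) (sin t) / Qf al be ga (cos t) (sin t)" for t
    have cQ: "continuous_on K (\<lambda>t. Qf al be ga (cos t) (sin t))" unfolding Qf_def by (intro continuous_intros)
    have cP: "continuous_on K (\<lambda>t. psi (cos t) (sin t))" by (intro psi_cont continuous_intros)
    have "continuous_on K f" unfolding f_def
      by (rule continuous_on_divide[OF cP cQ]) (use Qe in \<open>metis less_irrefl\<close>)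
    then have "\<exists>t0\<in>K. \<forall>t\<in>K. f t0 \<le> f t" by (rule continuous_attains_inf[OF \<open>compact K\<close> False])
    then obtain t0 where t0: "t0 \<in> K" "\<And>t. t \<in> K \<Longrightarrow> f t0 \<le> f t" by blast
    have f1: "f t0 > 1" unfolding f_def using strict[OF t0(1)] Qe[of t0] by simp
    show ?thesis
    proof (rule that[of "min (f t0 - 1) 1"])
      show "0 < min (f t0 - 1) 1" using f1 by simp
      show "min (f t0 - 1) 1 \<le> 1" by simp
      fix t assume "t \<in> K"
      have "(1 + min (f t0 - 1) 1) * Qf al be ga (cos t) (sin t) \<le> f t * Qf al be ga (cos t) (sin t)"
        using t0(2)[OF \<open>t \<in> K\<close>] Qe[of t] by (intro mult_right_mono) simp_all
      also have "\<dots> = psi (cos t) (sin t)" unfolding f_def using Qe[of t] by simp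
      finally show "(1 + min (f t0 - 1) 1) * Qf al be ga (cos t) (sin t) \<le> psi (cos t) (sin t)" .
    qed
  qed
  define ka where "ka = mu"
  define et where "et = 5 * mu / 12"
  define al' where "al' = (1 + ka) * al - (et + ka) * m1^2"
  define be' where "be' = (1 + ka) * be - (et + ka) * m2^2"
  define ga' where "ga' = (1 + ka) * ga - (et + ka) * m1 * m2"
  have Q'eq: "Qf al' be' ga' a b = (1 + ka) * Qf al be ga a b - (et + ka) * (A a b)^2" for a b
    unfolding al'_def be'_def ga'_def A_def Qf_def by (simp add: power2_eq_square algebra_simps)
  have etk: "et < 1" "0 < ka" "ka \<le> 1" "0 < et" using mu unfolding et_def ka_def by simp_all
  have Q'low: "Qf al' be' ga' a b \<ge> (1 - et) * Qf al be ga a b" for a b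
  proof -
    have "(et + ka) * (A a b)^2 \<le> (et + ka) * Qf al be ga a b" using Acs[of a b] etk by (intro mult_left_mono) simp_all
    then show ?thesis unfolding Q'eq by (simp add: algebra_simps)
  qed
  have Qnn: "Qf al be ga a b \<ge> 0" for a b
    using Qpos[of a b] unfolding Qf_def by (cases "a = 0 \<and> b = 0") auto
  have Q'e: "Qf al' be' ga' (cos t) (sin t) \<le> psi (cos t) (sin t)" if tI: "t \<in> {0..2*pi}" for t
  proof (cases "t \<in> K")
    case True
    have "Qf al' be' ga' (cos t) (sin t) \<le> (1 + ka) * Qf al be ga (cos t) (sin t)"
      unfolding Q'eq using etk by simp
    also have "\<dots> \<le> psi (cos t) (sin t)" using mu(3)[OF True] unfolding ka_def .
    finally show ?thesis .
  next
    case False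
    have gt: "(A (cos t) (sin t))^2 > 3/4 * Qf al be ga (cos t) (sin t)" using False tI unfolding K_def by auto
    have "(et + ka) * (3/4 * Qf al be ga (cos t) (sin t)) \<le> (et + ka) * (A (cos t) (sin t))^2"
      using gt etk by (intro mult_left_mono) simp_all
    then have "Qf al' be' ga' (cos t) (sin t) \<le> (1 + ka) * Qf al be ga (cos t) (sin t) - (et + ka) * (3/4 * Qf al be ga (cos t) (sin t))"
      unfolding Q'eq by simp
    also have "\<dots> = (1 - ka / 16) * Qf al be ga (cos t) (sin t)" unfolding et_def ka_def by (simp add: algebra_simps)
    also have "\<dots> \<le> Qf al be ga (cos t) (sin t)" using Qe[of t] etk by (simp add: mult_le_cancel_right1)
    also have "\<dots> \<le> psi (cos t) (sin t)" by (rule fe(3))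
    finally show ?thesis .
  qed
  have feas': "feasible al' be' ga'"
    unfolding feasible_def
  proof (intro conjI allI)
    have "al' = Qf al' be' ga' 1 0" unfolding Qf_def by simp
    also have "\<dots> \<ge> (1 - et) * Qf al be ga 1 0" by (rule Q'low)
    finally show "0 \<le> al'" using etk Qnn[of 1 0] by (smt (verit) mult_nonneg_nonneg)
    have "be' = Qf al' be' ga' 0 1" unfolding Qf_def by simp
    also have "\<dots> \<ge> (1 - et) * Qf al be ga 0 1" by (rule Q'low)
    finally show "0 \<le> be'" using etk Qnn[of 0 1] by (smt (verit) mult_nonneg_nonneg)
    fix a b :: real
    obtain r t where rt: "0 \<le> r" "0 \<le> t" "t \<le> 2 * pi" "a = r * cos t" "b = r * sin t" by (rule polar)
    have "Qf al' be' ga' a b = r^2 * Qf al' be' ga' (cos t) (sin t)" using rt Qf_scale by simp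
    also have "\<dots> \<le> r^2 * psi (cos t) (sin t)" using Q'e[of t] rt by (intro mult_left_mono) simp_all
    also have "\<dots> = psi a b" using rt psi_hom by simp
    finally show "Qf al' be' ga' a b \<le> psi a b" .
  qed
  have detid: "al' * be' - ga'^2 = (1 + ka) * ((1 + ka) - (et + ka) * Qf al be ga w1 w2) * D"
    unfolding al'_def be'_def ga'_def m1_def m2_def Qf_def D_def by (simp add: power2_eq_square algebra_simps)
  then have "al' * be' - ga'^2 = (1 + ka) * (1 - et) * D" using w by simp
  moreover have "(1 + ka) * (1 - et) > 1" unfolding et_def using etk unfolding ka_def
    by (simp add: algebra_simps)
  ultimately have "al' * be' - ga'^2 > D" using Dpos by simp
  with mx[OF feas'] show False unfolding D_def by simp
qed


lemma contact_closure:
  assumes feas: "feasible al be ga"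
    and c1: "psi a b = Qf al be ga a b" and c2: "psi c d = Qf al be ga c d"
    and eqQ: "Qf al be ga a b = Qf al be ga c d"
  shows "psi (a + c) (b + d) = Qf al be ga (a + c) (b + d)" "psi (a - c) (b - d) = Qf al be ga (a - c) (b - d)"
proof -
  have fe: "\<And>a b. Qf al be ga a b \<le> psi a b" using feas unfolding feasible_def by auto
  have "psi a b = psi c d" using c1 c2 eqQ by simp
  from psi_L[OF this] have "psi (a + c) (b + d) + psi (a - c) (b - d) \<le> 2 * psi a b + 2 * psi c d" .
  also have "\<dots> = Qf al be ga (a + c) (b + d) + Qf al be ga (a - c) (b - d)" using c1 c2 Qf_par by simp
  finally have le: "psi (a + c) (b + d) + psi (a - c) (b - d) \<le> Qf al be ga (a + c) (b + d) + Qf al be ga (a - c) (b - d)" .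
  show "psi (a + c) (b + d) = Qf al be ga (a + c) (b + d)" using le fe[of "a + c" "b + d"] fe[of "a - c" "b - d"] by simp
  show "psi (a - c) (b - d) = Qf al be ga (a - c) (b - d)" using le fe[of "a + c" "b + d"] fe[of "a - c" "b - d"] by simp
qed

lemma contact_scale:
  assumes "psi a b = Qf al be ga a b"
  shows "psi (t * a) (t * b) = Qf al be ga (t * a) (t * b)"
  using assms by (simp add: psi_hom Qf_scale)


lemma circle_all:
  assumes feas: "feasible al be ga"
    and Qu: "Qf al be ga u1 u2 = 1" and Qv: "Qf al be ga v1 v2 = 1" and Buv: "Bf al be ga u1 u2 v1 v2 = 0"
    and T0: "psi u1 u2 = 1"
    and Tth: "psi (cos th * u1 + sin th * v1) (cos th * u2 + sin th * v2) = 1" and sth: "sin th \<noteq> 0"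
  shows "psi (cos t * u1 + sin t * v1) (cos t * u2 + sin t * v2) = 1"
proof -
  define c1 where "c1 s = cos s * u1 + sin s * v1" for s
  define c2 where "c2 s = cos s * u2 + sin s * v2" for s
  define T where "T s \<longleftrightarrow> psi (c1 s) (c2 s) = 1" for s
  have Qc: "Qf al be ga (c1 s) (c2 s) = 1" for s
    unfolding c1_def c2_def Qf_lin Qu Qv Buv using sin_cos_squared_add[of s] by simp
  have ct: "psi (c1 s) (c2 s) = Qf al be ga (c1 s) (c2 s)" if "T s" for s using that Qc unfolding T_def by simp
  have mid: "T ((a + b) / 2)" if "T a" "T b" "cos ((a - b) / 2) \<noteq> 0" for a b
  proof -
    define d where "d = (a - b) / 2"
    define m where "m = (a + b) / 2"
    have h1: "cos a + cos b = 2 * cos d * cos m" "sin a + sin b = 2 * cos d * sin m"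
      unfolding d_def m_def using cos_plus_cos[of a b] sin_plus_sin[of a b] by simp_all
    have "c1 a + c1 b = (cos a + cos b) * u1 + (sin a + sin b) * v1" "c2 a + c2 b = (cos a + cos b) * u2 + (sin a + sin b) * v2"
      unfolding c1_def c2_def by (simp_all add: algebra_simps)
    then have e1: "c1 a + c1 b = (2 * cos d) * c1 m" "c2 a + c2 b = (2 * cos d) * c2 m"
      unfolding h1 c1_def c2_def by (simp_all add: algebra_simps)
    have "psi (c1 a + c1 b) (c2 a + c2 b) = Qf al be ga (c1 a + c1 b) (c2 a + c2 b)"
      by (rule contact_closure(1)[OF feas ct[OF that(1)] ct[OF that(2)]]) (simp add: Qc)
    then have "psi ((2 * cos d) * c1 m) ((2 * cos d) * c2 m) = Qf al be ga ((2 * cos d) * c1 m) ((2 * cos d) * c2 m)"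
      unfolding e1 .
    from contact_scale[OF this, of "1 / (2 * cos d)"] have "psi (c1 m) (c2 m) = Qf al be ga (c1 m) (c2 m)"
      using that(3) unfolding d_def by simp
    then show ?thesis unfolding T_def m_def using Qc by simp
  qed
  have perp: "T ((a + b) / 2 + pi / 2)" if "T a" "T b" "sin ((a - b) / 2) \<noteq> 0" for a b
  proof -
    define d where "d = (a - b) / 2"
    define m where "m = (a + b) / 2"
    have cm: "cos (m + pi / 2) = - sin m" "sin (m + pi / 2) = cos m" by (simp_all add: cos_add sin_add)
    have sd: "sin ((b - a) / 2) = - sin d" unfolding d_def by (metis minus_diff_eq minus_divide_left sin_minus)
    have h1: "cos a - cos b = 2 * sin d * (- sin m)" "sin a - sin b = 2 * sin d * cos m"
      using cos_diff_cos[of a b] sin_diff_sin[of a b] sd unfolding d_def m_def by simp_all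
    have "c1 a - c1 b = (cos a - cos b) * u1 + (sin a - sin b) * v1" "c2 a - c2 b = (cos a - cos b) * u2 + (sin a - sin b) * v2"
      unfolding c1_def c2_def by (simp_all add: algebra_simps)
    then have e1: "c1 a - c1 b = (2 * sin d) * c1 (m + pi / 2)" "c2 a - c2 b = (2 * sin d) * c2 (m + pi / 2)"
      unfolding h1 c1_def c2_def cm by (simp_all add: algebra_simps)
    have "psi (c1 a - c1 b) (c2 a - c2 b) = Qf al be ga (c1 a - c1 b) (c2 a - c2 b)"
      by (rule contact_closure(2)[OF feas ct[OF that(1)] ct[OF that(2)]]) (simp add: Qc)
    then have "psi ((2 * sin d) * c1 (m + pi / 2)) ((2 * sin d) * c2 (m + pi / 2)) = Qf al be ga ((2 * sin d) * c1 (m + pi / 2)) ((2 * sin d) * c2 (m + pi / 2))"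
      unfolding e1 .
    from contact_scale[OF this, of "1 / (2 * sin d)"] have "psi (c1 (m + pi / 2)) (c2 (m + pi / 2)) = Qf al be ga (c1 (m + pi / 2)) (c2 (m + pi / 2))"
      using that(3) unfolding d_def by simp
    then show ?thesis unfolding T_def m_def using Qc by simp
  qed
  have shift: "T (a + pi)" if "T a" for a
  proof -
    have "c1 (a + pi) = (-1) * c1 a" "c2 (a + pi) = (-1) * c2 a" unfolding c1_def c2_def by simp_all
    then show ?thesis using that psi_hom[of "-1" "c1 a" "c2 a"] unfolding T_def by simp
  qed
  define ph where "ph = th / 2"
  have sc: "sin (th / 2) \<noteq> 0" "cos (th / 2) \<noteq> 0"
    using sth sin_double[of "th / 2"] by auto
  have Tz: "T 0" unfolding T_def c1_def c2_def using T0 by simp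
  have Tt: "T th" unfolding T_def c1_def c2_def using Tth by simp
  have Tph: "T ph" using mid[OF Tt Tz] sc unfolding ph_def by simp
  have Tph2: "T (ph + pi / 2)" using perp[OF Tt Tz] sc unfolding ph_def by simp
  have base: "T (ph + real k * pi / 2) \<and> T (ph + real (Suc k) * pi / 2)" for k
  proof (induction k)
    case 0
    then show ?case using Tph Tph2 by simp
  next
    case (Suc k)
    have "T (ph + real k * pi / 2 + pi)" using Suc shift by blast
    moreover have "ph + real k * pi / 2 + pi = ph + real (Suc (Suc k)) * pi / 2" by (simp add: field_simps)
    ultimately show ?case using Suc by simp
  qed
  have dy: "T (ph + real k * pi / 2 ^ (n + 1))" for n k
  proof (induction n arbitrary: k)
    case 0
    then show ?case using base[of k] by simp
  next
    case (Suc n)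
    show ?case
    proof (cases "even k")
      case True
      then obtain j where j: "k = 2 * j" by blast
      have "ph + real k * pi / 2 ^ (Suc n + 1) = ph + real j * pi / 2 ^ (n + 1)" unfolding j by (simp add: field_simps)
      then show ?thesis using Suc.IH[of j] by simp
    next
      case False
      then obtain j where j: "k = 2 * j + 1" using oddE by blast
      define a where "a = ph + real (Suc j) * pi / 2 ^ (n + 1)"
      define b where "b = ph + real j * pi / 2 ^ (n + 1)"
      have "(a - b) / 2 = pi / 2 ^ (n + 2)" unfolding a_def b_def by (simp add: field_simps)
      moreover have "0 < pi / 2 ^ (n + 2)" by simp
      moreover have "pi / 2 ^ (n + 2) < pi / 2"
      proof -
        have "(2::real) ^ 1 < 2 ^ (n + 2)" by (rule power_strict_increasing) simp_all
        then have "(2::real) < 2 ^ (n + 2)" by simp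
        then show ?thesis by (intro divide_strict_left_mono) simp_all
      qed
      ultimately have "cos ((a - b) / 2) \<noteq> 0" using cos_gt_zero by (metis less_irrefl)
      from mid[OF Suc.IH[of "Suc j"] Suc.IH[of j]] this have "T ((a + b) / 2)" unfolding a_def b_def by simp
      moreover have "(a + b) / 2 = ph + real k * pi / 2 ^ (Suc n + 1)" unfolding a_def b_def j by (simp add: field_simps)
      ultimately show ?thesis by simp
    qed
  qed
  have per2: "T (s + 2 * pi * of_int j) \<longleftrightarrow> T s" for s j
  proof -
    have "c1 (s + 2 * pi * of_int j) = c1 s" "c2 (s + 2 * pi * of_int j) = c2 s"
      unfolding c1_def c2_def cos_add sin_add cos_int_2pin sin_int_2pin by simp_all
    then show ?thesis unfolding T_def by simp
  qed
  define t' where "t' = t - 2 * pi * of_int \<lfloor>(t - ph) / (2 * pi)\<rfloor>"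
  have t'ge: "t' \<ge> ph"
  proof -
    have "of_int \<lfloor>(t - ph) / (2 * pi)\<rfloor> \<le> (t - ph) / (2 * pi)" by (rule of_int_floor_le)
    then have "2 * pi * of_int \<lfloor>(t - ph) / (2 * pi)\<rfloor> \<le> 2 * pi * ((t - ph) / (2 * pi))"
      by (rule mult_left_mono) simp
    then have "2 * pi * of_int \<lfloor>(t - ph) / (2 * pi)\<rfloor> \<le> t - ph" by simp
    then show ?thesis unfolding t'_def by simp
  qed
  define q where "q n = (t' - ph) * 2 ^ (n + 1) / pi" for n :: nat
  define sq where "sq n = ph + real (nat \<lfloor>q n\<rfloor>) * pi / 2 ^ (n + 1)" for n
  have Tsq: "T (sq n)" for n unfolding sq_def by (rule dy)
  have qnn: "q n \<ge> 0" for n unfolding q_def using t'ge by simp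
  have sqb: "t' - pi / 2 ^ (n + 1) \<le> sq n \<and> sq n \<le> t'" for n
  proof -
    define X where "X = pi / 2 ^ (n + 1)"
    define F where "F = (of_int \<lfloor>q n\<rfloor> :: real)"
    have kq: "real (nat \<lfloor>q n\<rfloor>) = F" using qnn[of n] unfolding F_def by simp
    have f1: "F \<le> q n" "q n - 1 \<le> F" unfolding F_def by linarith+
    have p: "X > 0" unfolding X_def by simp
    have a1: "F * X \<le> q n * X" using f1(1) p by (intro mult_right_mono) simp_all
    have a2: "(q n - 1) * X \<le> F * X" using f1(2) p by (intro mult_right_mono) simp_all
    have qX: "q n * X = t' - ph" unfolding q_def X_def by simp
    have a3: "(q n - 1) * X = q n * X - X" by (simp add: left_diff_distrib)
    have a4: "sq n = ph + F * X" unfolding sq_def kq X_def by simp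
    from a1 a2 qX a3 a4 have "t' - X \<le> sq n \<and> sq n \<le> t'" by linarith
    then show ?thesis unfolding X_def .
  qed
  have lim0: "(\<lambda>n. (pi / 2) / 2 ^ n) \<longlonglongrightarrow> 0" by (rule LIMSEQ_divide_realpow_zero) simp
  have "(\<lambda>n. pi / 2 ^ (n + 1)) = (\<lambda>n. (pi / 2) / 2 ^ n)" by (simp add: field_simps)
  with lim0 have lim1: "(\<lambda>n. t' - pi / 2 ^ (n + 1)) \<longlonglongrightarrow> t' - 0" by (intro tendsto_diff) simp_all
  have sqlim: "sq \<longlonglongrightarrow> t'"
    by (rule tendsto_sandwich[OF _ _ lim1[simplified] tendsto_const]) (use sqb in \<open>auto intro: always_eventually\<close>)
  define g where "g s = psi (c1 s) (c2 s)" for s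
  have "continuous_on UNIV g" unfolding g_def c1_def c2_def by (intro psi_cont continuous_intros)
  then have "isCont g t'" by (simp add: continuous_on_eq_continuous_at)
  from isCont_tendsto_compose[OF this sqlim] have "(\<lambda>n. g (sq n)) \<longlonglongrightarrow> g t'" .
  moreover have "g (sq n) = 1" for n using Tsq[of n] unfolding T_def g_def .
  ultimately have "(\<lambda>n. 1) \<longlonglongrightarrow> g t'" by simp
  then have "T t'" unfolding T_def g_def LIMSEQ_const_iff by simp
  then show ?thesis using per2[of t' "\<lfloor>(t - ph) / (2 * pi)\<rfloor>"] unfolding t'_def T_def c1_def c2_def by simp
qed


lemma par2d: "(norm (x + y))^2 + (norm (x - y))^2 = 2 * (norm x)^2 + 2 * (norm y)^2"
proof -
  obtain al be ga where feas: "feasible al be ga" and det: "al * be - ga^2 > 0"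
    and mx: "\<And>al' be' ga'. feasible al' be' ga' \<Longrightarrow> al' * be' - ga'^2 \<le> al * be - ga^2"
    using max_exists by blast
  obtain p1 p2 q1 q2 where cp: "psi p1 p2 = Qf al be ga p1 p2" and cq: "psi q1 q2 = Qf al be ga q1 q2"
    and cr: "p1 * q2 - p2 * q1 \<noteq> 0"
    using contact_exists[OF feas det mx] by blast
  have fe: "0 \<le> al" "0 \<le> be" using feas unfolding feasible_def by auto
  have alpos: "al > 0"
  proof -
    have "al * be > 0" using det by (smt (verit) zero_le_power2)
    then show ?thesis using fe by (simp add: zero_less_mult_iff)
  qed
  have Qpos: "a \<noteq> 0 \<or> b \<noteq> 0 \<Longrightarrow> Qf al be ga a b > 0" for a b using Qf_pos[OF alpos det] by blast
  have pnz: "p1 \<noteq> 0 \<or> p2 \<noteq> 0" using cr by auto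
  have qnz: "q1 \<noteq> 0 \<or> q2 \<noteq> 0" using cr by auto
  define sp where "sp = sqrt (Qf al be ga p1 p2)"
  have sp: "sp > 0" "sp^2 = Qf al be ga p1 p2" unfolding sp_def using Qpos[OF pnz] by simp_all
  define u1 where "u1 = (1 / sp) * p1"
  define u2 where "u2 = (1 / sp) * p2"
  have Qu: "Qf al be ga u1 u2 = 1" unfolding u1_def u2_def Qf_scale using sp Qpos[OF pnz] by (simp add: power_divide)
  have cu: "psi u1 u2 = Qf al be ga u1 u2" unfolding u1_def u2_def by (rule contact_scale[OF cp])
  define b0 where "b0 = Bf al be ga q1 q2 u1 u2"
  define w1 where "w1 = q1 - b0 * u1"
  define w2 where "w2 = q2 - b0 * u2"
  have Buw: "Bf al be ga u1 u2 w1 w2 = 0"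
    unfolding w1_def w2_def Bf_diff b0_def using Qu by (simp add: Qf_Bf Bf_sym[of al be ga q1 q2])
  have crw: "u1 * w2 - u2 * w1 = (p1 * q2 - p2 * q1) / sp"
    unfolding w1_def w2_def u1_def u2_def by (simp add: algebra_simps diff_divide_distrib)
  then have crw0: "u1 * w2 - u2 * w1 \<noteq> 0" using cr sp by simp
  then have wnz: "w1 \<noteq> 0 \<or> w2 \<noteq> 0" by auto
  define sw where "sw = sqrt (Qf al be ga w1 w2)"
  have sw: "sw > 0" "sw^2 = Qf al be ga w1 w2" unfolding sw_def using Qpos[OF wnz] by simp_all
  define v1 where "v1 = (1 / sw) * w1"
  define v2 where "v2 = (1 / sw) * w2"
  have Qv: "Qf al be ga v1 v2 = 1" unfolding v1_def v2_def Qf_scale using sw Qpos[OF wnz] by (simp add: power_divide)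
  have Buv: "Bf al be ga u1 u2 v1 v2 = 0" unfolding v1_def v2_def Bf_scale Buw by simp
  have qdec: "q1 = b0 * u1 + sw * v1" "q2 = b0 * u2 + sw * v2"
    unfolding v1_def v2_def w1_def w2_def using sw by simp_all
  have Qq: "Qf al be ga q1 q2 = b0^2 + sw^2"
    unfolding qdec Qf_lin Qu Qv Buv by simp
  define sq where "sq = sqrt (Qf al be ga q1 q2)"
  have sq: "sq > 0" "sq^2 = Qf al be ga q1 q2" unfolding sq_def using Qpos[OF qnz] by simp_all
  have "(b0 / sq)^2 + (sw / sq)^2 = 1" using sq Qq sw(1) by (simp add: power_divide add_divide_distrib[symmetric])
  then obtain th where th: "b0 / sq = cos th" "sw / sq = sin th" by (rule sincos_total_2pi)
  have sth: "sin th \<noteq> 0" using th sw sq by auto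
  have cq': "psi ((1 / sq) * q1) ((1 / sq) * q2) = Qf al be ga ((1 / sq) * q1) ((1 / sq) * q2)"
    by (rule contact_scale[OF cq])
  have Qq': "Qf al be ga ((1 / sq) * q1) ((1 / sq) * q2) = 1" unfolding Qf_scale using sq Qpos[OF qnz] by (simp add: power_divide)
  have e1: "cos th * u1 + sin th * v1 = (1 / sq) * q1" "cos th * u2 + sin th * v2 = (1 / sq) * q2"
    unfolding th[symmetric] qdec by (simp_all add: add_divide_distrib)
  have Tth: "psi (cos th * u1 + sin th * v1) (cos th * u2 + sin th * v2) = 1"
    unfolding e1 using cq' Qq' by simp
  have T0: "psi u1 u2 = 1" using cu Qu by simp
  have circ: "psi (cos t * u1 + sin t * v1) (cos t * u2 + sin t * v2) = 1" for t
    by (rule circle_all[OF feas Qu Qv Buv T0 Tth sth])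
  define dl where "dl = u1 * v2 - u2 * v1"
  have dl: "dl \<noteq> 0" unfolding dl_def v1_def v2_def using crw0 sw by (simp add: algebra_simps)
  have allc: "psi a b = Qf al be ga a b" for a b
  proof -
    define al0 where "al0 = (a * v2 - b * v1) / dl"
    define be0 where "be0 = (u1 * b - u2 * a) / dl"
    have ab: "a = al0 * u1 + be0 * v1" "b = al0 * u2 + be0 * v2"
    proof -
      have "al0 * u1 + be0 * v1 = ((a * v2 - b * v1) * u1 + (u1 * b - u2 * a) * v1) / dl"
        unfolding al0_def be0_def by (simp add: add_divide_distrib)
      also have "(a * v2 - b * v1) * u1 + (u1 * b - u2 * a) * v1 = a * dl" unfolding dl_def by (simp add: algebra_simps)
      finally have 1: "a = al0 * u1 + be0 * v1" using dl by simp
      have "al0 * u2 + be0 * v2 = ((a * v2 - b * v1) * u2 + (u1 * b - u2 * a) * v2) / dl"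
        unfolding al0_def be0_def by (simp add: add_divide_distrib)
      also have "(a * v2 - b * v1) * u2 + (u1 * b - u2 * a) * v2 = b * dl" unfolding dl_def by (simp add: algebra_simps)
      finally have 2: "b = al0 * u2 + be0 * v2" using dl by simp
      show "a = al0 * u1 + be0 * v1" "b = al0 * u2 + be0 * v2" using 1 2 by simp_all
    qed
    obtain r t where rt: "al0 = r * cos t" "be0 = r * sin t" by (rule polar[of al0 be0]) blast
    have ab': "a = r * (cos t * u1 + sin t * v1)" "b = r * (cos t * u2 + sin t * v2)"
      unfolding ab rt by (simp_all add: algebra_simps)
    have "Qf al be ga (cos t * u1 + sin t * v1) (cos t * u2 + sin t * v2) = 1"
      unfolding Qf_lin Qu Qv Buv using sin_cos_squared_add[of t] by simp
    then show ?thesis unfolding ab' psi_hom Qf_scale using circ[of t] by simp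
  qed
  have "psi 1 1 + psi 1 (-1) = 2 * psi 1 0 + 2 * psi 0 1"
    using allc Qf_par[of al be ga 1 0 0 1] by simp
  moreover have "psi 1 1 = (norm (x + y))^2" "psi 1 (-1) = (norm (x - y))^2" "psi 1 0 = (norm x)^2" "psi 0 1 = (norm y)^2"
    unfolding psi_def by simp_all
  ultimately show ?thesis by simp
qed

end

lemma par_all:
  fixes x y :: "'a::real_normed_vector"
  assumes Lc: "\<And>u v::'a. norm u = norm v \<Longrightarrow> (norm (u + v))^2 + (norm (u - v))^2 \<le> 2 * (norm u)^2 + 2 * (norm v)^2"
  shows "(norm (x + y))^2 + (norm (x - y))^2 = 2 * (norm x)^2 + 2 * (norm y)^2"
proof (cases "\<forall>a b. a *\<^sub>R x + b *\<^sub>R y = 0 \<longrightarrow> a = 0 \<and> b = 0")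
  case True
  then show ?thesis using par2d[of x y] Lc by blast
next
  case False
  then obtain a b where ab: "a *\<^sub>R x + b *\<^sub>R y = 0" "a \<noteq> 0 \<or> b \<noteq> 0" by blast
  show ?thesis
  proof (cases "b = 0")
    case True
    then have "x = 0" using ab by simp
    then show ?thesis by simp
  next
    case False
    define t where "t = - a / b"
    have yt: "y = t *\<^sub>R x"
    proof -
      have "b *\<^sub>R y = - (a *\<^sub>R x)" using ab(1) by (simp add: eq_neg_iff_add_eq_0 add.commute)
      then have "y = (1 / b) *\<^sub>R (- (a *\<^sub>R x))" using False by (metis scaleR_scaleR divide_self_if scaleR_one mult.commute times_divide_eq_left mult_1)
      then show ?thesis unfolding t_def by (simp add: divide_inverse)
    qed
    have "x + y = (1 + t) *\<^sub>R x" "x - y = (1 - t) *\<^sub>R x" unfolding yt by (simp_all add: algebra_simps)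
    then have n: "norm (x + y) = \<bar>1 + t\<bar> * norm x" "norm (x - y) = \<bar>1 - t\<bar> * norm x" "norm y = \<bar>t\<bar> * norm x"
      using yt by simp_all
    show ?thesis unfolding n power_mult_distrib power2_abs by (simp add: power2_eq_square algebra_simps)
  qed
qed


lemma unit_L_scale:
  fixes u v :: "'a::real_normed_vector"
  assumes L1: "\<And>x y::'a. norm x = 1 \<Longrightarrow> norm y = 1 \<Longrightarrow> (norm (x + y))^2 + (norm (x - y))^2 \<le> 4"
    and uv: "norm u = norm v"
  shows "(norm (u + v))^2 + (norm (u - v))^2 \<le> 2 * (norm u)^2 + 2 * (norm v)^2"
proof (cases "u = 0")
  case True
  then have "v = 0" using uv by simp
  then show ?thesis using True by simp
next
  case False
  define n where "n = norm u"
  have n: "n > 0" using False unfolding n_def by simp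
  define x where "x = (1 / n) *\<^sub>R u"
  define y where "y = (1 / n) *\<^sub>R v"
  have "norm x = 1" "norm y = 1" unfolding x_def y_def using n uv unfolding n_def by simp_all
  from L1[OF this] have h: "(norm (x + y))^2 + (norm (x - y))^2 \<le> 4" .
  have eq: "u + v = n *\<^sub>R (x + y)" "u - v = n *\<^sub>R (x - y)" unfolding x_def y_def using n by (simp_all add: algebra_simps)
  have e1: "norm (u + v) = n * norm (x + y)" "norm (u - v) = n * norm (x - y)"
    unfolding eq using n by simp_all
  have e: "(norm (u + v))^2 + (norm (u - v))^2 = n^2 * ((norm (x + y))^2 + (norm (x - y))^2)"
    unfolding e1 by (simp add: power_mult_distrib algebra_simps)
  have "n^2 * ((norm (x + y))^2 + (norm (x - y))^2) \<le> n^2 * 4" using h by (intro mult_left_mono) simp_all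
  then show ?thesis using e uv unfolding n_def by simp
qed

theorem theorem3p5:
  fixes X :: "'a::banach itself"
  assumes dim2: "\<exists>B :: 'a set. independent B \<and> card B = 2"
  shows "norm_from_inner_product X \<longleftrightarrow> P_angle_constant X = 0"
proof -
  define S where "S = {(norm (x + y)^2 + norm (x - y)^2 - 4) / (2 * norm (x + y) * norm (x - y)) | x y :: 'a.
      norm x = 1 \<and> norm y = 1 \<and> x \<noteq> y \<and> x \<noteq> - y}"
  have PS: "P_angle_constant X = Sup S" unfolding P_angle_constant_def S_def ..
  obtain B :: "'a set" where B: "independent B" "card B = 2" using dim2 by blast
  then obtain b1 b2 where b: "B = {b1, b2}" "b1 \<noteq> b2" by (meson card_2_iff)
  have b0: "b1 \<noteq> 0" "b2 \<noteq> 0" using B(1) b(1) dependent_zero by auto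
  define x0 where "x0 = (1 / norm b1) *\<^sub>R b1"
  define y0 where "y0 = (1 / norm b2) *\<^sub>R b2"
  have nx0: "norm x0 = 1" "norm y0 = 1" unfolding x0_def y0_def using b0 by simp_all
  have xy0: "x0 \<noteq> y0 \<and> x0 \<noteq> - y0"
  proof (rule ccontr)
    assume "\<not> ?thesis"
    then obtain s where s: "x0 = s *\<^sub>R y0" by (metis scaleR_minus1_left scaleR_one)
    have "b1 = norm b1 *\<^sub>R x0" unfolding x0_def using b0 by simp
    also have "\<dots> = (norm b1 * s / norm b2) *\<^sub>R b2" unfolding s y0_def by simp
    moreover have "b2 \<in> span {b2}" by (simp add: span_base)
    ultimately have "b1 \<in> span {b2}" by (metis span_scale)
    moreover have "B - {b1} = {b2}" using b by auto
    ultimately have "b1 \<in> span (B - {b1})" by simp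
    then have "dependent B" using b(1) unfolding dependent_def by blast
    then show False using B(1) by simp
  qed
  have Sne: "S \<noteq> {}" unfolding S_def using nx0 xy0 by blast
  have Sbd: "z \<le> 1" if "z \<in> S" for z
  proof -
    obtain x y :: 'a where xy: "norm x = 1" "norm y = 1" "x \<noteq> y" "x \<noteq> - y"
      and z: "z = (norm (x + y)^2 + norm (x - y)^2 - 4) / (2 * norm (x + y) * norm (x - y))"
      using \<open>z \<in> S\<close> unfolding S_def by blast
    have a: "norm (x + y) > 0" using xy(4) by (simp add: add_eq_0_iff2)
    have bb: "norm (x - y) > 0" using xy(3) by simp
    have "\<bar>norm (x + y) - norm (x - y)\<bar> \<le> norm ((x + y) - (x - y))" by (rule norm_triangle_ineq3)
    also have "(x + y) - (x - y) = 2 *\<^sub>R y" by (simp add: algebra_simps flip: scaleR_2)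
    finally have "\<bar>norm (x + y) - norm (x - y)\<bar> \<le> 2" using xy(2) by simp
    then have "(norm (x + y) - norm (x - y))^2 \<le> 2^2" by (metis abs_le_square_iff abs_numeral)
    then have "norm (x + y)^2 + norm (x - y)^2 - 4 \<le> 2 * norm (x + y) * norm (x - y)"
      by (simp add: power2_eq_square algebra_simps)
    then show ?thesis unfolding z using a bb by (simp add: divide_le_eq_1)
  qed
  have bdd: "bdd_above S" unfolding bdd_above_def using Sbd by blast
  show ?thesis
  proof
    assume "norm_from_inner_product X"
    then obtain ip :: "'a \<Rightarrow> 'a \<Rightarrow> real" where ip: "\<forall>x y. ip x y = ip y x" "\<forall>x y z. ip (x + y) z = ip x z + ip y z"
      "\<forall>r x y. ip (r *\<^sub>R x) y = r * ip x y" "\<forall>x. norm x = sqrt (ip x x)" "\<forall>x. 0 \<le> ip x x"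
      unfolding norm_from_inner_product_def by blast
    have nsq: "(norm x)^2 = ip x x" for x :: 'a using ip(4,5) by simp
    have addr: "ip z (x + y) = ip z x + ip z y" for x y z using ip(1,2) by metis
    have neg: "ip (- x) y = - ip x y" for x y using ip(3)[rule_format, of "-1" x y] by simp
    have negr: "ip y (- x) = - ip y x" for x y using neg ip(1) by metis
    have par: "(norm (x + y))^2 + (norm (x - y))^2 = 2 * (norm x)^2 + 2 * (norm y)^2" for x y :: 'a
    proof -
      have e1: "ip (x + y) (x + y) = ip x x + ip x y + ip y x + ip y y" using ip(2) addr by simp
      have e2: "ip (x - y) (x - y) = ip x x - ip x y - ip y x + ip y y"
      proof -
        have "ip (x + - y) (x + - y) = ip x x + ip x (- y) + ip (- y) x + ip (- y) (- y)"
          by (simp only: ip(2)[rule_format] addr add.assoc)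
        also have "\<dots> = ip x x - ip x y - ip y x + ip y y" using neg negr by simp
        finally show ?thesis by simp
      qed
      show ?thesis using nsq[of "x + y"] nsq[of "x - y"] nsq[of x] nsq[of y] e1 e2 by simp
    qed
    have "S = {0}"
    proof -
      have "z = 0" if "z \<in> S" for z
      proof -
        obtain x y :: 'a where xy: "norm x = 1" "norm y = 1"
          and z: "z = (norm (x + y)^2 + norm (x - y)^2 - 4) / (2 * norm (x + y) * norm (x - y))"
          using \<open>z \<in> S\<close> unfolding S_def by blast
        show ?thesis unfolding z par xy by simp
      qed
      then show ?thesis using Sne by blast
    qed
    then show "P_angle_constant X = 0" unfolding PS by simp
  next
    assume "P_angle_constant X = 0"
    then have S0: "Sup S = 0" unfolding PS .
    have L1: "(norm (x + y))^2 + (norm (x - y))^2 \<le> 4" if "norm x = 1" "norm y = 1" for x y :: 'a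
    proof (cases "x = y \<or> x = - y")
      case True
      then show ?thesis
      proof
        assume "x = y"
        then have "norm (x + y) = 2" using that by (simp flip: scaleR_2)
        then show ?thesis using \<open>x = y\<close> by simp
      next
        assume "x = - y"
        then have "x - y = - (y + y)" by simp
        then have "norm (x - y) = 2" using that by (simp flip: scaleR_2)
        then show ?thesis using \<open>x = - y\<close> by simp
      qed
    next
      case False
      have a: "norm (x + y) > 0" using False by (simp add: add_eq_0_iff2)
      have bb: "norm (x - y) > 0" using False by simp
      have "(norm (x + y)^2 + norm (x - y)^2 - 4) / (2 * norm (x + y) * norm (x - y)) \<in> S"
        unfolding S_def using that False by blast
      then have "(norm (x + y)^2 + norm (x - y)^2 - 4) / (2 * norm (x + y) * norm (x - y)) \<le> 0"
        using cSup_upper[OF _ bdd] S0 by fastforce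
      moreover have "norm (x - y) * norm (x + y) > 0" using a bb by simp
      ultimately have "norm (x + y)^2 + norm (x - y)^2 - 4 \<le> 0" using a bb by (simp add: divide_le_0_iff)
      then show ?thesis by simp
    qed
    have Lc: "\<And>u v::'a. norm u = norm v \<Longrightarrow> (norm (u + v))^2 + (norm (u - v))^2 \<le> 2 * (norm u)^2 + 2 * (norm v)^2"
      by (rule unit_L_scale[OF L1])
    have par: "\<And>x y::'a. (norm (x + y))^2 + (norm (x - y))^2 = 2 * (norm x)^2 + 2 * (norm y)^2"
      using par_all[OF Lc] by blast
    show "norm_from_inner_product X" unfolding norm_from_inner_product_def using jvn[OF par] by blast
  qed
qed

end
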